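(* Let $S$ be a semiring. A left $S$-semimodule $P$ is $k$-projective if and only if every short exact sequence of left $S$-semimodules $0\to A\xrightarrow{f}B\xrightarrow{g}P\to0$ is right-splitting, i.e. there exists an $S$-linear $g':P\to B$ with $g\circ g'=\mathrm{id}_P$.
   Context: A semiring $(S,+,0,\cdot,1)$ consists of a commutative monoid $(S,+,0)$ and a monoid $(S,\cdot,1)$ with $0\neq 1$, absorbing zero and both distributive laws; left $S$-semimodules and $S$-linear maps are as for modules without subtraction. For an $S$-linear $h:X\to Y$, $\mathrm{Ker}(h)=\{x\mid h(x)=0\}$; $h$ is $k$-normal if $h(x)=h(x')$ implies $x+k=x'+k'$ for some $k,k'\in\mathrm{Ker}(h)$; a normal epimorphism is a surjective $k$-normal map. A short exact sequence $0\to A\xrightarrow{f}B\xrightarrow{g}C\to0$ means: $f$ injective, $f(A)=\mathrm{Ker}(g)$, $g$ surjective and $k$-normal. $P$ is $k$-projective if for every left $S$-semimodule $M$, every normal epimorphism $f:M\to N$ and every $S$-linear $g:P\to N$, there exists an $S$-linear $h:P\to M$ with $f\circ h=g$. *)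

theory Defs
  imports Main
begin

record ('s, 'm) semimodule =
  carrier :: "'m set"
  mzero   :: 'm
  madd    :: "'m \<Rightarrow> 'm \<Rightarrow> 'm"
  msmult  :: "'s \<Rightarrow> 'm \<Rightarrow> 'm"

definition is_semimodule :: "('s::semiring_1, 'm) semimodule \<Rightarrow> bool" where
  "is_semimodule M \<longleftrightarrow>
     mzero M \<in> carrier M \<and>
     (\<forall>x\<in>carrier M. \<forall>y\<in>carrier M. madd M x y \<in> carrier M) \<and>
     (\<forall>r. \<forall>x\<in>carrier M. msmult M r x \<in> carrier M) \<and>
     (\<forall>x\<in>carrier M. \<forall>y\<in>carrier M. \<forall>z\<in>carrier M.
        madd M (madd M x y) z = madd M x (madd M y z)) \<and>
     (\<forall>x\<in>carrier M. \<forall>y\<in>carrier M. madd M x y = madd M y x) \<and>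
     (\<forall>x\<in>carrier M. madd M (mzero M) x = x) \<and>
     (\<forall>r s. \<forall>x\<in>carrier M. msmult M (r * s) x = msmult M r (msmult M s x)) \<and>
     (\<forall>x\<in>carrier M. msmult M 1 x = x) \<and>
     (\<forall>r. \<forall>x\<in>carrier M. \<forall>y\<in>carrier M.
        msmult M r (madd M x y) = madd M (msmult M r x) (msmult M r y)) \<and>
     (\<forall>r s. \<forall>x\<in>carrier M. msmult M (r + s) x = madd M (msmult M r x) (msmult M s x)) \<and>
     (\<forall>x\<in>carrier M. msmult M 0 x = mzero M) \<and>
     (\<forall>r. msmult M r (mzero M) = mzero M)"

definition linear_map ::
  "('s::semiring_1, 'm) semimodule \<Rightarrow> ('s, 'n) semimodule \<Rightarrow> ('m \<Rightarrow> 'n) \<Rightarrow> bool" where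
  "linear_map M N h \<longleftrightarrow>
     (\<forall>x\<in>carrier M. h x \<in> carrier N) \<and>
     (\<forall>x\<in>carrier M. \<forall>y\<in>carrier M. h (madd M x y) = madd N (h x) (h y)) \<and>
     (\<forall>r. \<forall>x\<in>carrier M. h (msmult M r x) = msmult N r (h x))"

definition Ker ::
  "('s, 'm) semimodule \<Rightarrow> ('s, 'n) semimodule \<Rightarrow> ('m \<Rightarrow> 'n) \<Rightarrow> 'm set" where
  "Ker M N h = {x \<in> carrier M. h x = mzero N}"

definition k_normal ::
  "('s, 'm) semimodule \<Rightarrow> ('s, 'n) semimodule \<Rightarrow> ('m \<Rightarrow> 'n) \<Rightarrow> bool" where
  "k_normal M N h \<longleftrightarrow>
     (\<forall>x\<in>carrier M. \<forall>x'\<in>carrier M. h x = h x' \<longrightarrow>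
        (\<exists>k\<in>Ker M N h. \<exists>k'\<in>Ker M N h. madd M x k = madd M x' k'))"

definition normal_epi ::
  "('s::semiring_1, 'm) semimodule \<Rightarrow> ('s, 'n) semimodule \<Rightarrow> ('m \<Rightarrow> 'n) \<Rightarrow> bool" where
  "normal_epi M N h \<longleftrightarrow> linear_map M N h \<and> h ` carrier M = carrier N \<and> k_normal M N h"

definition short_exact ::
  "('s::semiring_1, 'a) semimodule \<Rightarrow> ('s, 'b) semimodule \<Rightarrow> ('s, 'c) semimodule
   \<Rightarrow> ('a \<Rightarrow> 'b) \<Rightarrow> ('b \<Rightarrow> 'c) \<Rightarrow> bool" where
  "short_exact A B C f g \<longleftrightarrow>
     linear_map A B f \<and> linear_map B C g \<and>
     inj_on f (carrier A) \<and> f ` carrier A = Ker B C g \<and>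
     g ` carrier B = carrier C \<and> k_normal B C g"

text \<open>k-projectivity, with the universes (types) of the semimodules M and N made explicit.\<close>
definition k_projective ::
  "'m itself \<Rightarrow> 'n itself \<Rightarrow> ('s::semiring_1, 'p) semimodule \<Rightarrow> bool" where
  "k_projective _ _ P \<longleftrightarrow>
     (\<forall>(M::('s, 'm) semimodule) (N::('s, 'n) semimodule) f g.
        is_semimodule M \<longrightarrow> is_semimodule N \<longrightarrow> normal_epi M N f \<longrightarrow> linear_map P N g \<longrightarrow>
        (\<exists>h. linear_map P M h \<and> (\<forall>x\<in>carrier P. f (h x) = g x)))"

definition ses_right_split ::
  "'a itself \<Rightarrow> 'b itself \<Rightarrow> ('s::semiring_1, 'p) semimodule \<Rightarrow> bool" where
  "ses_right_split _ _ P \<longleftrightarrow>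
     (\<forall>(A::('s, 'a) semimodule) (B::('s, 'b) semimodule) f g.
        is_semimodule A \<longrightarrow> is_semimodule B \<longrightarrow> short_exact A B P f g \<longrightarrow>
        (\<exists>g'. linear_map P B g' \<and> (\<forall>x\<in>carrier P. g (g' x) = x)))"

end

theory Submission
  imports Defs
begin

definition pbm :: "('s::semiring_1, 'm) semimodule \<Rightarrow> ('s, 'p) semimodule \<Rightarrow> ('m \<times> 'p) set
   \<Rightarrow> ('s, 'm \<times> 'p) semimodule" where
  "pbm M P S = \<lparr>carrier = S, mzero = (mzero M, mzero P),
     madd = (\<lambda>x y. (madd M (fst x) (fst y), madd P (snd x) (snd y))),
     msmult = (\<lambda>r x. (msmult M r (fst x), msmult P r (snd x)))\<rparr>"

lemma pbm_semimodule:
  assumes M: "is_semimodule M" and P: "is_semimodule P"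
    and sub: "S \<subseteq> carrier M \<times> carrier P"
    and z: "(mzero M, mzero P) \<in> S"
    and add: "\<And>x y. x \<in> S \<Longrightarrow> y \<in> S \<Longrightarrow> (madd M (fst x) (fst y), madd P (snd x) (snd y)) \<in> S"
    and sm: "\<And>r x. x \<in> S \<Longrightarrow> (msmult M r (fst x), msmult P r (snd x)) \<in> S"
  shows "is_semimodule (pbm M P S)"
proof -
  have fs: "\<And>x. x \<in> S \<Longrightarrow> fst x \<in> carrier M \<and> snd x \<in> carrier P" using sub by auto
  note Md = M[unfolded is_semimodule_def]
  note Pd = P[unfolded is_semimodule_def]
  have Mc: "\<forall>x\<in>carrier M. \<forall>y\<in>carrier M. madd M x y = madd M y x" using Md by blast
  have Pc: "\<forall>x\<in>carrier P. \<forall>y\<in>carrier P. madd P x y = madd P y x" using Pd by blast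
  have Ma: "\<forall>x\<in>carrier M. \<forall>y\<in>carrier M. \<forall>z\<in>carrier M.
        madd M (madd M x y) z = madd M x (madd M y z)" using Md by blast
  have Pa: "\<forall>x\<in>carrier P. \<forall>y\<in>carrier P. \<forall>z\<in>carrier P.
        madd P (madd P x y) z = madd P x (madd P y z)" using Pd by blast
  have Mr: "(\<forall>x\<in>carrier M. madd M (mzero M) x = x) \<and>
     (\<forall>r s. \<forall>x\<in>carrier M. msmult M (r * s) x = msmult M r (msmult M s x)) \<and>
     (\<forall>x\<in>carrier M. msmult M 1 x = x) \<and>
     (\<forall>r. \<forall>x\<in>carrier M. \<forall>y\<in>carrier M.
        msmult M r (madd M x y) = madd M (msmult M r x) (msmult M r y)) \<and>
     (\<forall>r s. \<forall>x\<in>carrier M. msmult M (r + s) x = madd M (msmult M r x) (msmult M s x)) \<and>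
     (\<forall>x\<in>carrier M. msmult M 0 x = mzero M) \<and>
     (\<forall>r. msmult M r (mzero M) = mzero M)" using Md by blast
  have Pr: "(\<forall>x\<in>carrier P. madd P (mzero P) x = x) \<and>
     (\<forall>r s. \<forall>x\<in>carrier P. msmult P (r * s) x = msmult P r (msmult P s x)) \<and>
     (\<forall>x\<in>carrier P. msmult P 1 x = x) \<and>
     (\<forall>r. \<forall>x\<in>carrier P. \<forall>y\<in>carrier P.
        msmult P r (madd P x y) = madd P (msmult P r x) (msmult P r y)) \<and>
     (\<forall>r s. \<forall>x\<in>carrier P. msmult P (r + s) x = madd P (msmult P r x) (msmult P s x)) \<and>
     (\<forall>x\<in>carrier P. msmult P 0 x = mzero P) \<and>
     (\<forall>r. msmult P r (mzero P) = mzero P)" using Pd by blast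
  show ?thesis
    unfolding is_semimodule_def pbm_def semimodule.simps
    apply (intro conjI ballI allI)
    using z add sm apply blast
    using z add sm apply blast
    using z add sm apply blast
    subgoal for x y z using fs[of x] fs[of y] fs[of z] Ma Pa by (simp add: prod_eq_iff)
    subgoal for x y using fs[of x] fs[of y] Mc Pc by (simp add: prod_eq_iff)
    using fs Mr Pr by (simp_all add: prod_eq_iff)
qed

lemma lin_zero:
  assumes "is_semimodule M" "is_semimodule N" "linear_map M N h"
  shows "h (mzero M) = mzero N"
proof -
  have z: "mzero M \<in> carrier M" "msmult M 0 (mzero M) = mzero M"
    using assms(1) unfolding is_semimodule_def by auto
  have "h (mzero M) = h (msmult M 0 (mzero M))" using z by simp
  also have "\<dots> = msmult N 0 (h (mzero M))" using assms(3) z unfolding linear_map_def by blast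
  also have "\<dots> = mzero N" using assms(2,3) z unfolding is_semimodule_def linear_map_def by blast
  finally show ?thesis .
qed

theorem mainTheorem8:
  fixes P :: "('s::semiring_1, 'p) semimodule"
  assumes "is_semimodule P"
  shows "(k_projective TYPE('b) TYPE('p) P \<longrightarrow> ses_right_split TYPE('a) TYPE('b) P) \<and>
         (ses_right_split TYPE('m \<times> 'p) TYPE('m \<times> 'p) P \<longrightarrow> k_projective TYPE('m) TYPE('n) P)"
proof (intro conjI impI)
  assume kp: "k_projective TYPE('b) TYPE('p) P"
  show "ses_right_split TYPE('a) TYPE('b) P"
    unfolding ses_right_split_def
  proof (intro allI impI)
    fix A :: "('s, 'a) semimodule" and B :: "('s, 'b) semimodule" and f g
    assume A: "is_semimodule A" and B: "is_semimodule B" and se: "short_exact A B P f g"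
    have ne: "normal_epi B P g" using se unfolding short_exact_def normal_epi_def by blast
    have lid: "linear_map P P id" using assms unfolding linear_map_def is_semimodule_def by auto
    from kp[unfolded k_projective_def, rule_format, OF B assms ne lid]
    show "\<exists>g'. linear_map P B g' \<and> (\<forall>x\<in>carrier P. g (g' x) = x)" by auto
  qed
next
  assume sr: "ses_right_split TYPE('m \<times> 'p) TYPE('m \<times> 'p) P"
  show "k_projective TYPE('m) TYPE('n) P"
    unfolding k_projective_def
  proof (intro allI impI)
    fix M :: "('s, 'm) semimodule" and N :: "('s, 'n) semimodule" and f g
    assume M: "is_semimodule M" and N: "is_semimodule N" and ne: "normal_epi M N f"
      and lg: "linear_map P N g"
    have lf: "linear_map M N f" and sf: "f ` carrier M = carrier N" and kf: "k_normal M N f"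
      using ne unfolding normal_epi_def by auto
    have f0: "f (mzero M) = mzero N" using lin_zero[OF M N lf] .
    have g0: "g (mzero P) = mzero N" using lin_zero[OF assms N lg] .
    define S where "S = {x. fst x \<in> carrier M \<and> snd x \<in> carrier P \<and> f (fst x) = g (snd x)}"
    define S0 where "S0 = {x. x \<in> S \<and> snd x = mzero P}"
    define Bm where "Bm = pbm M P S"
    define Am where "Am = pbm M P S0"
    have Mz: "mzero M \<in> carrier M" and Pz: "mzero P \<in> carrier P"
      using M assms unfolding is_semimodule_def by auto
    have Madd: "\<And>x y. x \<in> carrier M \<Longrightarrow> y \<in> carrier M \<Longrightarrow> madd M x y \<in> carrier M"
      and Msm: "\<And>r x. x \<in> carrier M \<Longrightarrow> msmult M r x \<in> carrier M"
      using M unfolding is_semimodule_def by auto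
    have Padd: "\<And>x y. x \<in> carrier P \<Longrightarrow> y \<in> carrier P \<Longrightarrow> madd P x y \<in> carrier P"
      and Psm: "\<And>r x. x \<in> carrier P \<Longrightarrow> msmult P r x \<in> carrier P"
      and Psm0: "\<And>r. msmult P r (mzero P) = mzero P"
      and Pz0: "\<And>x. x \<in> carrier P \<Longrightarrow> madd P (mzero P) x = x"
      using assms unfolding is_semimodule_def by auto
    have flin: "\<And>x y. x \<in> carrier M \<Longrightarrow> y \<in> carrier M \<Longrightarrow> f (madd M x y) = madd N (f x) (f y)"
      "\<And>r x. x \<in> carrier M \<Longrightarrow> f (msmult M r x) = msmult N r (f x)"
      using lf unfolding linear_map_def by auto
    have glin: "\<And>x y. x \<in> carrier P \<Longrightarrow> y \<in> carrier P \<Longrightarrow> g (madd P x y) = madd N (g x) (g y)"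
      "\<And>r x. x \<in> carrier P \<Longrightarrow> g (msmult P r x) = msmult N r (g x)"
      "\<And>x. x \<in> carrier P \<Longrightarrow> g x \<in> carrier N"
      using lg unfolding linear_map_def by auto
    have Sadd: "\<And>x y. x \<in> S \<Longrightarrow> y \<in> S \<Longrightarrow> (madd M (fst x) (fst y), madd P (snd x) (snd y)) \<in> S"
      unfolding S_def using Madd Padd flin glin by auto
    have Ssm: "\<And>r x. x \<in> S \<Longrightarrow> (msmult M r (fst x), msmult P r (snd x)) \<in> S"
      unfolding S_def using Msm Psm flin glin by auto
    have Sz: "(mzero M, mzero P) \<in> S" unfolding S_def using Mz Pz f0 g0 by auto
    have B: "is_semimodule Bm" unfolding Bm_def
      by (rule pbm_semimodule[OF M assms _ Sz Sadd Ssm]) (auto simp: S_def)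
    have A: "is_semimodule Am" unfolding Am_def
      by (rule pbm_semimodule[OF M assms _ _ _ _])
         (auto simp: S0_def Sz Psm0 Pz0 Pz intro: Sadd Ssm, auto simp: S_def Madd Msm flin glin Pz g0 f0 N[unfolded is_semimodule_def])
    have lid: "linear_map Am Bm id" unfolding linear_map_def Am_def Bm_def pbm_def S0_def by auto
    have lsnd: "linear_map Bm P snd" unfolding linear_map_def Bm_def pbm_def S_def by auto
    have ker: "Ker Bm P snd = S0" unfolding Ker_def Bm_def pbm_def S0_def by auto
    have surj: "snd ` carrier Bm = carrier P"
    proof
      show "snd ` carrier Bm \<subseteq> carrier P" unfolding Bm_def pbm_def S_def by auto
      show "carrier P \<subseteq> snd ` carrier Bm"
      proof
        fix p assume p: "p \<in> carrier P"
        then have "g p \<in> f ` carrier M" using sf glin(3) by auto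
        then obtain m where "m \<in> carrier M" "f m = g p" by auto
        then have "(m, p) \<in> carrier Bm" unfolding Bm_def pbm_def S_def using p by auto
        then show "p \<in> snd ` carrier Bm" by force
      qed
    qed
    have kn: "k_normal Bm P snd"
      unfolding k_normal_def
    proof (intro ballI impI)
      fix x x' assume x: "x \<in> carrier Bm" and x': "x' \<in> carrier Bm" and e: "snd x = snd x'"
      have "f (fst x) = f (fst x')" using x x' e unfolding Bm_def pbm_def S_def by auto
      moreover have "fst x \<in> carrier M" "fst x' \<in> carrier M" using x x' unfolding Bm_def pbm_def S_def by auto
      ultimately obtain k k' where k: "k \<in> Ker M N f" "k' \<in> Ker M N f"
        and kk: "madd M (fst x) k = madd M (fst x') k'"
        using kf unfolding k_normal_def by blast
      have kS: "(k, mzero P) \<in> S0" "(k', mzero P) \<in> S0"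
        using k g0 Pz unfolding Ker_def S0_def S_def by auto
      have sx: "snd x \<in> carrier P" using x unfolding Bm_def pbm_def S_def by auto
      have "madd P (snd x) (mzero P) = snd x"
        using assms sx Pz unfolding is_semimodule_def by metis
      then have "madd Bm x (k, mzero P) = madd Bm x' (k', mzero P)"
        unfolding Bm_def pbm_def using kk e by (simp add: prod_eq_iff)
      then show "\<exists>k\<in>Ker Bm P snd. \<exists>k'\<in>Ker Bm P snd. madd Bm x k = madd Bm x' k'"
        using kS ker by blast
    qed
    have se: "short_exact Am Bm P id snd"
      unfolding short_exact_def using lid lsnd surj kn ker
      by (auto simp: Am_def pbm_def)
    obtain g' where g': "linear_map P Bm g'" "\<forall>x\<in>carrier P. snd (g' x) = x"
      using sr[unfolded ses_right_split_def, rule_format, OF A B se] by blast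
    have gS: "\<And>p. p \<in> carrier P \<Longrightarrow> g' p \<in> S" using g'(1) unfolding linear_map_def Bm_def pbm_def by auto
    have "linear_map P M (\<lambda>p. fst (g' p))"
      using g'(1) gS unfolding linear_map_def Bm_def pbm_def S_def by auto
    moreover have "\<forall>x\<in>carrier P. f (fst (g' x)) = g x"
      using gS g'(2) unfolding S_def by auto
    ultimately show "\<exists>h. linear_map P M h \<and> (\<forall>x\<in>carrier P. f (h x) = g x)" by blast
  qed
qed

end
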